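(* Let $\Lambda$ be an integral lattice in an $n$-dimensional Euclidean space whose minimum $m$ is even. Let $x_0\in\Lambda$ with $N(x_0)=2m-2$, and let $\mathcal E=\{\pm y_1,\dots,\pm y_k\}$ be the set of all vectors $y\in\Lambda$ with $N(y)=2m+2$ and $y-x_0\in 2\Lambda$. Then the lines $\mathbb R y_1,\dots,\mathbb R y_k$ form an equiangular family of lines with common angle $\arccos\frac{1}{m+1}$ (equivalently $|y_i\cdot y_j|=2$ for all $i\neq j$), and the linear span of $\mathcal E$ has dimension at most $n-1$. (Families consisting of fewer than three lines are allowed.)
   Context: $N(x)=x\cdot x$ is the norm of $x$. A lattice $\Lambda$ is integral if $x\cdot y\in\mathbb Z$ for all $x,y\in\Lambda$. The minimum of $\Lambda$ is the smallest norm of a nonzero vector of $\Lambda$. A family of lines is equiangular with common angle $\theta$ if any two distinct lines in it make the angle $\theta$. *)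

theory Defs
  imports "HOL-Analysis.Analysis"
begin

definition lattice :: "'a::euclidean_space set \<Rightarrow> bool" where
  "lattice L \<longleftrightarrow> (\<exists>B. independent B \<and> span B = UNIV \<and>
     L = {x. \<exists>c. (\<forall>b\<in>B. c b \<in> \<int>) \<and> x = (\<Sum>b\<in>B. c b *\<^sub>R b)})"

definition norm_sq :: "'a::euclidean_space \<Rightarrow> real" ("N") where
  "N x = x \<bullet> x"

definition integral_lattice :: "'a::euclidean_space set \<Rightarrow> bool" where
  "integral_lattice L \<longleftrightarrow> lattice L \<and> (\<forall>x\<in>L. \<forall>y\<in>L. x \<bullet> y \<in> \<int>)"

definition lattice_min :: "'a::euclidean_space set \<Rightarrow> real" where
  "lattice_min L = Inf {N x | x. x \<in> L \<and> x \<noteq> 0}"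

definition line_angle :: "'a::euclidean_space \<Rightarrow> 'a \<Rightarrow> real" where
  "line_angle y z = arccos (\<bar>y \<bullet> z\<bar> / (norm y * norm z))"

definition equiangular_lines :: "'a::euclidean_space set \<Rightarrow> real \<Rightarrow> bool" where
  "equiangular_lines Y \<theta> \<longleftrightarrow> (0 \<notin> Y \<and>
     (\<forall>y\<in>Y. \<forall>z\<in>Y. span {y} \<noteq> span {z} \<longrightarrow> line_angle y z = \<theta>))"

end

theory Submission
  imports Defs
begin

lemma lat_add:
  assumes "lattice L" "x \<in> L" "y \<in> L" shows "x + y \<in> L"
proof -
  obtain B where B: "independent B" and L: "L = {x. \<exists>c. (\<forall>b\<in>B. c b \<in> \<int>) \<and> x = (\<Sum>b\<in>B. c b *\<^sub>R b)}"
    using assms(1) unfolding lattice_def by blast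
  obtain c where c: "\<forall>b\<in>B. c b \<in> \<int>" "x = (\<Sum>b\<in>B. c b *\<^sub>R b)" using assms(2) L by blast
  obtain d where d: "\<forall>b\<in>B. d b \<in> \<int>" "y = (\<Sum>b\<in>B. d b *\<^sub>R b)" using assms(3) L by blast
  have "x + y = (\<Sum>b\<in>B. (c b + d b) *\<^sub>R b)"
    using c d by (simp add: scaleR_add_left sum.distrib)
  moreover have "\<forall>b\<in>B. c b + d b \<in> \<int>" using c d by auto
  ultimately have "\<exists>e. (\<forall>b\<in>B. e b \<in> \<int>) \<and> x + y = (\<Sum>b\<in>B. e b *\<^sub>R b)"
    by (intro exI[of _ "\<lambda>b. c b + d b"]) simp
  then show ?thesis unfolding L by simp
qed

lemma lat_uminus:
  assumes "lattice L" "x \<in> L" shows "- x \<in> L"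
proof -
  obtain B where B: "independent B" and L: "L = {x. \<exists>c. (\<forall>b\<in>B. c b \<in> \<int>) \<and> x = (\<Sum>b\<in>B. c b *\<^sub>R b)}"
    using assms(1) unfolding lattice_def by blast
  obtain c where c: "\<forall>b\<in>B. c b \<in> \<int>" "x = (\<Sum>b\<in>B. c b *\<^sub>R b)" using assms(2) L by blast
  have "- x = (\<Sum>b\<in>B. (- c b) *\<^sub>R b)"
    using c by (simp add: sum_negf)
  moreover have "\<forall>b\<in>B. - c b \<in> \<int>" using c by auto
  ultimately have "\<exists>e. (\<forall>b\<in>B. e b \<in> \<int>) \<and> - x = (\<Sum>b\<in>B. e b *\<^sub>R b)"
    by (intro exI[of _ "\<lambda>b. - c b"]) simp
  then show ?thesis unfolding L by simp
qed

lemma lat_diff: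
  assumes "lattice L" "x \<in> L" "y \<in> L" shows "x - y \<in> L"
  using lat_add[OF assms(1,2) lat_uminus[OF assms(1,3)]] by simp

lemma min_le:
  assumes "of_int m = lattice_min L" "a \<in> L" "a \<noteq> 0" shows "of_int m \<le> N a"
proof -
  have "bdd_below {N x | x. x \<in> L \<and> x \<noteq> 0}"
    by (rule bdd_belowI[where m=0]) (auto simp: norm_sq_def)
  moreover have "N a \<in> {N x | x. x \<in> L \<and> x \<noteq> 0}" using assms by blast
  ultimately have "Inf {N x | x. x \<in> L \<and> x \<noteq> 0} \<le> N a"
    by (rule cInf_lower[rotated])
  then show ?thesis using assms(1) unfolding lattice_min_def by simp
qed

lemma expand1: "(x0 + 2 *\<^sub>R w) \<bullet> (x0 + 2 *\<^sub>R w') = x0 \<bullet> x0 + 2 * (x0 \<bullet> w) + 2 * (x0 \<bullet> w') + 4 * (w \<bullet> w')"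
  for x0 w w' :: "'a::euclidean_space"
  by (simp add: inner_add_left inner_add_right inner_commute algebra_simps)

lemma elemE:
  assumes IL: "integral_lattice L" and mm: "of_int m = lattice_min L" and ev: "even m"
    and x0: "x0 \<in> L" "N x0 = 2 * of_int m - 2"
    and y: "y \<in> L" "N y = 2 * of_int m + 2" "y - x0 \<in> ((*\<^sub>R) 2) ` L"
  obtains w where "w \<in> L" "y = x0 + 2 *\<^sub>R w" "x0 \<bullet> w = 1 - of_int m" "w \<bullet> w = of_int m"
proof -
  have lat: "lattice L" using IL unfolding integral_lattice_def by blast
  obtain w where w: "w \<in> L" "y - x0 = 2 *\<^sub>R w" using y(3) by blast
  have yw: "y = x0 + 2 *\<^sub>R w" using w(2) by (simp add: algebra_simps)
  have e1: "N y = x0 \<bullet> x0 + 4 * (x0 \<bullet> w) + 4 * (w \<bullet> w)"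
    unfolding norm_sq_def yw expand1 by simp
  have w0: "w \<noteq> 0" using y(2) x0(2) yw by auto
  have q: "of_int m \<le> w \<bullet> w" using min_le[OF mm w(1) w0] by (simp add: norm_sq_def)
  have wx: "w + x0 \<in> L" by (rule lat_add[OF lat w(1) x0(1)])
  have wx0: "w + x0 \<noteq> 0"
  proof
    assume "w + x0 = 0"
    then have "w = - x0" by (simp add: eq_neg_iff_add_eq_0)
    then have "y = - x0" using yw by (simp add: scaleR_2 algebra_simps)
    then show False using y(2) x0(2) by (simp add: norm_sq_def)
  qed
  have q2: "of_int m \<le> (w + x0) \<bullet> (w + x0)" using min_le[OF mm wx wx0] by (simp add: norm_sq_def)
  have e2: "(w + x0) \<bullet> (w + x0) = w \<bullet> w + 2 * (x0 \<bullet> w) + x0 \<bullet> x0"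
    by (simp add: inner_add_left inner_add_right inner_commute)
  have "x0 \<bullet> w = 1 - of_int m" "w \<bullet> w = of_int m"
    using e1 e2 q q2 x0(2) y(2) unfolding norm_sq_def by linarith+
  then show ?thesis using that w(1) yw by blast
qed

theorem theorem1p3:
  fixes L :: "'a::euclidean_space set" and m :: int and x0 :: 'a
  assumes "integral_lattice L"
    and "of_int m = lattice_min L"
    and "even m"
    and "x0 \<in> L" and "N x0 = 2 * of_int m - 2"
  defines "E \<equiv> {y \<in> L. N y = 2 * of_int m + 2 \<and> y - x0 \<in> ((*\<^sub>R) 2) ` L}"
  shows "equiangular_lines E (arccos (1 / (of_int m + 1)))
     \<and> (\<forall>y\<in>E. \<forall>z\<in>E. z \<noteq> y \<and> z \<noteq> - y \<longrightarrow> \<bar>y \<bullet> z\<bar> = 2)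
     \<and> dim E \<le> DIM('a) - 1"
proof -
  note IL = assms(1) and mm = assms(2) and ev = assms(3) and x0 = assms(4,5)
  have lat: "lattice L" using IL unfolding integral_lattice_def by blast
  have intL: "\<And>a b. a \<in> L \<Longrightarrow> b \<in> L \<Longrightarrow> a \<bullet> b \<in> \<int>" using IL unfolding integral_lattice_def by blast
  obtain j where j: "m = 2 * j" using ev by blast
  have Epos: "2 * real_of_int m + 2 > 0" if "y \<in> E" for y
  proof -
    have "N y \<ge> 0" by (simp add: norm_sq_def)
    moreover have "m \<noteq> -1" using j by presburger
    ultimately show ?thesis using that unfolding E_def by auto
  qed
  have orth: "x0 \<bullet> y = 0" if "y \<in> E" for y
  proof -
    have "y \<in> L" "N y = 2 * of_int m + 2" "y - x0 \<in> ((*\<^sub>R) 2) ` L" using that unfolding E_def by auto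
    note R = elemE[OF IL mm ev x0 this]
    obtain w where "w \<in> L" "y = x0 + 2 *\<^sub>R w" "x0 \<bullet> w = 1 - of_int m" "w \<bullet> w = of_int m"
      by (rule R)
    then show ?thesis using x0(2) by (simp add: inner_add_right norm_sq_def)
  qed
  have pair: "\<bar>y \<bullet> z\<bar> = 2" if yz: "y \<in> E" "z \<in> E" "z \<noteq> y" "z \<noteq> - y" for y z
  proof -
    have "y \<in> L" "N y = 2 * of_int m + 2" "y - x0 \<in> ((*\<^sub>R) 2) ` L" using yz(1) unfolding E_def by auto
    note R = elemE[OF IL mm ev x0 this]
    obtain w where w: "w \<in> L" "y = x0 + 2 *\<^sub>R w" "x0 \<bullet> w = 1 - of_int m" "w \<bullet> w = of_int m"
      by (rule R)
    have "z \<in> L" "N z = 2 * of_int m + 2" "z - x0 \<in> ((*\<^sub>R) 2) ` L" using yz(2) unfolding E_def by auto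
    note R = elemE[OF IL mm ev x0 this]
    obtain w' where w': "w' \<in> L" "z = x0 + 2 *\<^sub>R w'" "x0 \<bullet> w' = 1 - of_int m" "w' \<bullet> w' = of_int m"
      by (rule R)
    obtain k where k: "w \<bullet> w' = of_int k" using intL[OF w(1) w'(1)] by (auto elim: Ints_cases)
    have yz_eq: "y \<bullet> z = 4 * of_int k - 2 * of_int m + 2"
      using w w' k x0(2) by (simp add: expand1 norm_sq_def)
    have u: "w - w' \<in> L" by (rule lat_diff[OF lat w(1) w'(1)])
    have u0: "w - w' \<noteq> 0" using w(2) w'(2) yz(3) by auto
    have v: "w + w' + x0 \<in> L" by (rule lat_add[OF lat lat_add[OF lat w(1) w'(1)] x0(1)])
    have v0: "w + w' + x0 \<noteq> 0"
    proof
      assume "w + w' + x0 = 0"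
      moreover have "y + z = 2 *\<^sub>R (w + w' + x0)" by (simp add: w(2) w'(2) algebra_simps scaleR_2)
      ultimately have "y + z = 0" by simp
      then show False using yz(4) by (simp add: eq_neg_iff_add_eq_0 add.commute)
    qed
    have "of_int m \<le> (w - w') \<bullet> (w - w')" using min_le[OF mm u u0] by (simp add: norm_sq_def)
    moreover have "(w - w') \<bullet> (w - w') = w \<bullet> w + w' \<bullet> w' - 2 * (w \<bullet> w')"
      by (simp add: inner_diff_left inner_diff_right inner_commute)
    moreover have "of_int m \<le> (w + w' + x0) \<bullet> (w + w' + x0)" using min_le[OF mm v v0] by (simp add: norm_sq_def)
    moreover have "(w + w' + x0) \<bullet> (w + w' + x0) = w \<bullet> w + w' \<bullet> w' + x0 \<bullet> x0 + 2 * (w \<bullet> w') + 2 * (x0 \<bullet> w) + 2 * (x0 \<bullet> w')"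
      by (simp add: inner_add_left inner_add_right inner_commute)
    ultimately have "real_of_int m \<le> 2 * of_int m - 2 * of_int k" "real_of_int m \<le> 2 * of_int k + 2"
      using w(3,4) w'(3,4) k x0(2) unfolding norm_sq_def by linarith+
    then have "m \<le> 2 * m - 2 * k" "m \<le> 2 * k + 2" by linarith+
    then have "k = j \<or> k = j - 1" using j by linarith
    then show ?thesis
    proof
      assume "k = j" then show ?thesis using yz_eq j by simp
    next
      assume "k = j - 1" then show ?thesis using yz_eq j by simp
    qed
  qed
  have "equiangular_lines E (arccos (1 / (of_int m + 1)))"
    unfolding equiangular_lines_def
  proof (intro conjI ballI impI)
    show "0 \<notin> E"
    proof
      assume "0 \<in> E"
      then have "N (0::'a) = 2 * of_int m + 2" unfolding E_def by blast
      moreover have "m \<noteq> -1" using j by presburger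
      ultimately show False by (simp add: norm_sq_def)
    qed
  next
    fix y z assume yz: "y \<in> E" "z \<in> E" "span {y} \<noteq> span {z}"
    have "z \<noteq> y" using yz(3) by auto
    moreover have "z \<noteq> - y"
    proof
      assume zy: "z = - y"
      have "span {- y} \<subseteq> span {y}"
        by (rule span_minimal) (auto intro: span_neg span_base)
      moreover have "span {y} \<subseteq> span {- y}"
        by (rule span_minimal) (use span_neg[OF span_base[of "- y" "{- y}"]] in auto)
      ultimately show False using yz(3) zy by blast
    qed
    ultimately have a: "\<bar>y \<bullet> z\<bar> = 2" using pair yz by blast
    have ny: "norm y = sqrt (2 * of_int m + 2)" using yz(1) unfolding E_def norm_sq_def
      by (simp add: norm_eq_sqrt_inner)
    have nz: "norm z = sqrt (2 * of_int m + 2)" using yz(2) unfolding E_def norm_sq_def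
      by (simp add: norm_eq_sqrt_inner)
    have p: "2 * real_of_int m + 2 > 0" using Epos yz(1) by blast
    have "norm y * norm z = 2 * of_int m + 2" using ny nz p by simp
    then have "\<bar>y \<bullet> z\<bar> / (norm y * norm z) = 1 / (of_int m + 1)" using a p
      by (simp add: field_simps)
    then show "line_angle y z = arccos (1 / (of_int m + 1))" unfolding line_angle_def by simp
  qed
  moreover have "dim E \<le> DIM('a) - 1"
  proof -
    have "x0 \<noteq> 0"
    proof
      assume "x0 = 0"
      then have "real_of_int m = 1" using x0(2) by (simp add: norm_sq_def)
      then have "m = 1" by linarith
      then show False using j by presburger
    qed
    moreover have "E \<subseteq> {x. x0 \<bullet> x = 0}" using orth by blast
    ultimately show ?thesis using dim_subset[of E "{x. x0 \<bullet> x = 0}"] dim_hyperplane[of x0] by simp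
  qed
  ultimately show ?thesis using pair by blast
qed

end
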